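(* For $l,m,n,u,v\in\mathbb{N}$, \[ \sum_{k=-\infty}^\infty (-1)^k\binom{l+m}{l+k}\binom{m+n}{m+k}\binom{n+l}{n+k}\binom{u+v}{u+k}\binom{u+v}{v+k} =\binom{u+v}{u}\sum_{k=0}^{\infty} \frac{(l+m+n-k)!\,(u+v+k)!}{k!\,(l-k)!\,(m-k)!\,(n-k)!\,(u+k)!\,(v+k)!}. \]
   Context: Convention: $1/j!=0$ for negative integers $j$, and binomial coefficients $\binom{a}{b}$ with $b<0$ or $b>a$ are $0$. *)

theory Defs
  imports "HOL-Analysis.Analysis"
begin

definition zbinom :: "int \<Rightarrow> int \<Rightarrow> int" where
  "zbinom a b = (if 0 \<le> b \<and> b \<le> a then int (nat a choose nat b) else 0)"

definition invfact :: "int \<Rightarrow> real" where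
  "invfact j = (if j < 0 then 0 else 1 / fact (nat j))"

end

theory Submission
  imports Defs
begin


lemma rf_rec: "invfact j = real_of_int (j+1) * invfact (j+1)"
proof (cases "j < -1")
  case True then show ?thesis by (simp add: invfact_def)
next
  case False
  then consider "j = -1" | "j \<ge> 0" by linarith
  then show ?thesis
  proof cases
    case 1 then show ?thesis by (simp add: invfact_def)
  next
    case 2
    then have "nat (j+1) = Suc (nat j)" by simp
    moreover have "real_of_int (j+1) = real (Suc (nat j))" using 2 by simp
    ultimately show ?thesis using 2 by (simp add: invfact_def field_simps del: of_nat_Suc)
  qed
qed

lemma rf_dn: "invfact (x - 1) = real_of_int x * invfact x"
  using rf_rec[of "x-1"] by simp

lemma rf_neg: "j < 0 \<Longrightarrow> invfact j = 0" by (simp add: invfact_def)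

definition dT :: "int \<Rightarrow> int \<Rightarrow> int \<Rightarrow> int \<Rightarrow> real" where
  "dT a b c k = (-1) powi k * invfact (a+k) * invfact (a-k) * invfact (b+k) * invfact (b-k)
      * invfact (c+k) * invfact (c-k)"

definition dG :: "int \<Rightarrow> int \<Rightarrow> int \<Rightarrow> int \<Rightarrow> real" where
  "dG a b c k = -(1/2) * (-1) powi k * invfact (a+k) * invfact (a+1-k) * invfact (b+k-1) * invfact (b-k)
      * invfact (c+k-1) * invfact (c-k)"

lemma powi_m1_succ: "(-1::real) powi (k+1) = - ((-1) powi k)"
  by (simp add: power_int_add)

lemma rf_up: "y = x+1 \<Longrightarrow> invfact x = real_of_int y * invfact y"
  using rf_rec[of x] by simp

lemma dix_pt:
  "real_of_int ((a+1)*(a+b+1)*(a+c+1)) * dT (a+1) b c k - real_of_int (a+b+c+1) * dT a b c k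
   = dG a b c (k+1) - dG a b c k"
proof -
  define s where "s = (-1::real) powi k"
  define A1 where "A1 = invfact (a+1+k)"
  define A2 where "A2 = invfact (a+1-k)"
  define B1 where "B1 = invfact (b+1+k)"
  define B2 where "B2 = invfact (b+1-k)"
  define C1 where "C1 = invfact (c+1+k)"
  define C2 where "C2 = invfact (c+1-k)"
  have e1: "invfact (a+k) = of_int (a+1+k) * A1" unfolding A1_def by (rule rf_up) simp
  have e2: "invfact (a-k) = of_int (a+1-k) * A2" unfolding A2_def by (rule rf_up) simp
  have e3: "invfact (b+k) = of_int (b+1+k) * B1" unfolding B1_def by (rule rf_up) simp
  have e4: "invfact (b-k) = of_int (b+1-k) * B2" unfolding B2_def by (rule rf_up) simp
  have e5: "invfact (c+k) = of_int (c+1+k) * C1" unfolding C1_def by (rule rf_up) simp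
  have e6: "invfact (c-k) = of_int (c+1-k) * C2" unfolding C2_def by (rule rf_up) simp
  have f1: "invfact (a+(k+1)) = A1" unfolding A1_def by (simp add: ac_simps)
  have f2: "invfact (a+1-(k+1)) = of_int (a+1-k) * A2" using e2 by simp
  have f3: "invfact (b+(k+1)-1) = of_int (b+1+k) * B1" using e3 by simp
  have f4: "invfact (b-(k+1)) = of_int (b-k) * (of_int (b+1-k) * B2)"
    using e4 rf_up[of "b-k" "b-(k+1)"] by simp
  have f5: "invfact (c+(k+1)-1) = of_int (c+1+k) * C1" using e5 by simp
  have f6: "invfact (c-(k+1)) = of_int (c-k) * (of_int (c+1-k) * C2)"
    using e6 rf_up[of "c-k" "c-(k+1)"] by simp
  have g3: "invfact (b+k-1) = of_int (b+k) * (of_int (b+1+k) * B1)"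
    using e3 rf_up[of "b+k" "b+k-1"] by simp
  have g5: "invfact (c+k-1) = of_int (c+k) * (of_int (c+1+k) * C1)"
    using e5 rf_up[of "c+k" "c+k-1"] by simp
  have h1: "invfact (a+1+k) = A1" "invfact (a+1-k) = A2" by (simp_all add: A1_def A2_def)
  show ?thesis
    unfolding dT_def dG_def powi_m1_succ s_def[symmetric] h1 e1 e2 e3 e4 e5 e6 f1 f2 f3 f4 f5 f6 g3 g5 of_int_add of_int_diff of_int_mult of_int_1
    by algebra
qed

lemma tele_nat: "(\<Sum>k\<in>{(a::int)..<a+int n}. H(k+1) - H k) = H (a + int n) - (H a :: real)"
proof (induction n)
  case 0 then show ?case by simp
next
  case (Suc n)
  have e: "a + int (Suc n) = a + int n + 1" by simp
  have "{a..<a+int n+1} = insert (a+int n) {a..<a+int n}" by auto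
  then show ?case unfolding e using Suc by simp
qed

lemma tele: "0 \<le> (N::int) \<Longrightarrow> (\<Sum>k\<in>{-N..N}. H(k+1) - H k) = H (N+1) - (H (-N) :: real)"
proof -
  assume N: "0 \<le> N"
  have "{-N..N} = {-N..<-N + int (nat (2*N+1))}" using N by auto
  moreover have "-N + int (nat (2*N+1)) = N+1" using N by simp
  ultimately show ?thesis using tele_nat[of H "-N" "nat (2*N+1)"] by simp
qed

definition dV :: "nat \<Rightarrow> nat \<Rightarrow> nat \<Rightarrow> real" where
  "dV a b c = fact (a+b+c) * invfact (int a) * invfact (int b) * invfact (int c)
     * invfact (int a + int b) * invfact (int b + int c) * invfact (int c + int a)"

lemma fact_invfact: "fact n * invfact (int n) = 1"
  by (simp add: invfact_def)

lemma dixon_fin: "int a \<le> N \<Longrightarrow> (\<Sum>k\<in>{-N..N}. dT (int a) (int b) (int c) k) = dV a b c"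
proof (induction a arbitrary: N)
  case 0
  have "\<And>k. dT 0 (int b) (int c) k = (if k = 0 then invfact (int b) ^ 2 * invfact (int c) ^ 2 else 0)"
  proof -
    fix k :: int
    show "dT 0 (int b) (int c) k = (if k = 0 then invfact (int b) ^ 2 * invfact (int c) ^ 2 else 0)"
    proof (cases "k = 0")
      case True then show ?thesis by (simp add: dT_def power2_eq_square invfact_def)
    next
      case False
      then have "invfact k = 0 \<or> invfact (-k) = 0" by (cases "k < 0") (auto simp: rf_neg)
      then show ?thesis using False by (auto simp: dT_def)
    qed
  qed
  then have "(\<Sum>k\<in>{-N..N}. dT (int 0) (int b) (int c) k) = invfact (int b) ^ 2 * invfact (int c) ^ 2"
    using 0 by (simp add: sum.delta)
  also have "\<dots> = dV 0 b c"
    using fact_invfact[of "b+c"] by (simp add: dV_def power2_eq_square invfact_def)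
  finally show ?case .
next
  case (Suc a)
  let ?a = "int a" and ?b = "int b" and ?c = "int c"
  have N: "?a \<le> N" "0 \<le> N" using Suc.prems by auto
  have "(\<Sum>k\<in>{-N..N}. real_of_int ((?a+1)*(?a+?b+1)*(?a+?c+1)) * dT (?a+1) ?b ?c k
            - real_of_int (?a+?b+?c+1) * dT ?a ?b ?c k) = (\<Sum>k\<in>{-N..N}. dG ?a ?b ?c (k+1) - dG ?a ?b ?c k)"
    by (simp only: dix_pt)
  also have "\<dots> = dG ?a ?b ?c (N+1) - dG ?a ?b ?c (-N)" by (rule tele) (use N in simp)
  also have "\<dots> = 0" using Suc.prems by (simp add: dG_def rf_neg)
  finally have "real_of_int ((?a+1)*(?a+?b+1)*(?a+?c+1)) * (\<Sum>k\<in>{-N..N}. dT (?a+1) ?b ?c k)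
      = real_of_int (?a+?b+?c+1) * (\<Sum>k\<in>{-N..N}. dT ?a ?b ?c k)"
    by (simp add: sum_subtractf sum_distrib_left)
  also have "\<dots> = real_of_int (?a+?b+?c+1) * dV a b c" using Suc.IH N by simp
  also have "\<dots> = real_of_int ((?a+1)*(?a+?b+1)*(?a+?c+1)) * dV (Suc a) b c"
  proof -
    have "fact (Suc a + b + c) = real (a+b+c+1) * fact (a+b+c)" by simp
    moreover have "invfact ?a = of_int (int (Suc a)) * invfact (int (Suc a))" by (rule rf_up) simp
    moreover have "invfact (?a+?b) = of_int (int (Suc a) + ?b) * invfact (int (Suc a) + ?b)" by (rule rf_up) simp
    moreover have "invfact (?c+?a) = of_int (?c + int (Suc a)) * invfact (?c + int (Suc a))" by (rule rf_up) simp
    ultimately show ?thesis unfolding dV_def by (simp add: algebra_simps)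
  qed
  finally have "(\<Sum>k\<in>{-N..N}. dT (?a+1) ?b ?c k) = dV (Suc a) b c"
    by (simp add: mult.commute del: of_nat_Suc)
  moreover have "int (Suc a) = ?a + 1" by simp
  ultimately show ?case by (simp only:)
qed

definition mr :: "int \<Rightarrow> int \<Rightarrow> int \<Rightarrow> int \<Rightarrow> int \<Rightarrow> real" where
  "mr l m n K j = fact (nat (l+m+n-j)) * invfact (l-j) * invfact (m-j) * invfact (n-j)
     * invfact (j-K) * invfact (j+K)"

definition mH :: "int \<Rightarrow> int \<Rightarrow> int \<Rightarrow> int \<Rightarrow> int \<Rightarrow> real" where
  "mH l m n K j = - fact (nat (l+m+n+1-j)) * invfact (l+1-j) * invfact (m-j) * invfact (n-j)
     * invfact (j-1-K) * invfact (j-1+K)"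

lemma fact_up: "0 \<le> x \<Longrightarrow> y = x + 1 \<Longrightarrow> (fact (nat y) :: real) = of_int y * fact (nat x)"
proof -
  assume "0 \<le> x" "y = x+1"
  then have "nat y = Suc (nat x)" by simp
  then show ?thesis using \<open>0 \<le> x\<close> \<open>y = x+1\<close> by (simp add: of_nat_Suc)
qed

lemma m_pt:
  assumes "0 \<le> l" "0 \<le> m" "0 \<le> n"
  shows "real_of_int ((l+K+1)*(l+1-K)) * mr (l+1) m n K j - real_of_int ((l+m+1)*(l+n+1)) * mr l m n K j
   = mH l m n K (j+1) - mH l m n K j"
proof (cases "j \<le> l+m+n")
  case False
  then have "m - j < 0" "m - (j+1) < 0" using assms by auto
  then show ?thesis by (simp add: mr_def mH_def rf_neg)
next
  case True
  define X where "X = (fact (nat (l+m+n-j)) :: real)"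
  define P1 where "P1 = invfact (l+1-j)"
  define M1 where "M1 = invfact (m-j)"
  define N1 where "N1 = invfact (n-j)"
  define J1 where "J1 = invfact (j-K)"
  define J2 where "J2 = invfact (j+K)"
  have x1: "fact (nat (l+1+m+n-j)) = of_int (l+1+m+n-j) * X" unfolding X_def
    by (rule fact_up) (use True in simp_all)
  have x2: "fact (nat (l+m+n+1-j)) = of_int (l+m+n+1-j) * X" unfolding X_def
    by (rule fact_up) (use True in simp_all)
  have x3: "fact (nat (l+m+n+1-(j+1))) = X" unfolding X_def by simp
  have p1: "invfact (l+1-j) = P1" "invfact (m-j) = M1" "invfact (n-j) = N1"
     "invfact (j-K) = J1" "invfact (j+K) = J2" by (simp_all add: P1_def M1_def N1_def J1_def J2_def)
  have p2: "invfact (l-j) = of_int (l+1-j) * P1" unfolding P1_def by (rule rf_up) simp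
  have p3: "invfact (l+1-(j+1)) = of_int (l+1-j) * P1" using p2 by simp
  have p4: "invfact (m-(j+1)) = of_int (m-j) * M1" unfolding M1_def by (rule rf_up) simp
  have p5: "invfact (n-(j+1)) = of_int (n-j) * N1" unfolding N1_def by (rule rf_up) simp
  have p6: "invfact (j+1-1-K) = J1" "invfact (j+1-1+K) = J2" using p1 by simp_all
  have p7: "invfact (j-1-K) = of_int (j-K) * J1" unfolding J1_def by (rule rf_up) simp
  have p8: "invfact (j-1+K) = of_int (j+K) * J2" unfolding J2_def by (rule rf_up) simp
  have x0: "fact (nat (l+m+n-j)) = X" unfolding X_def ..
  show ?thesis
    unfolding mr_def mH_def x0 x1 x2 x3 p1 p2 p3 p4 p5 p6 p7 p8
      of_int_add of_int_diff of_int_mult of_int_1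
    by algebra
qed

definition mLeft :: "int \<Rightarrow> int \<Rightarrow> int \<Rightarrow> int \<Rightarrow> real" where
  "mLeft l m n K = fact (nat (l+m)) * fact (nat (m+n)) * fact (nat (n+l)) * invfact (l+K) * invfact (m-K)
     * invfact (m+K) * invfact (n-K) * invfact (n+K) * invfact (l-K)"

lemma fi: "0 \<le> x \<Longrightarrow> fact (nat x) * invfact x = 1"
  by (simp add: invfact_def)


lemma M_fin:
  fixes m n K p :: nat
  assumes "int (K+p) \<le> N"
  shows "(\<Sum>j\<in>{-N..N}. mr (int (K+p)) (int m) (int n) (int K) j) = mLeft (int (K+p)) (int m) (int n) (int K)"
  using assms
proof (induction p arbitrary: N)
  case 0
  let ?K = "int K"
  define v where "v = mr ?K (int m) (int n) ?K ?K"
  have eq: "\<And>j. mr ?K (int m) (int n) ?K j = (if j = ?K then v else 0)"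
  proof -
    fix j
    show "mr ?K (int m) (int n) ?K j = (if j = ?K then v else 0)"
    proof (cases "j = ?K")
      case False
      then have "invfact (?K - j) = 0 \<or> invfact (j - ?K) = 0" by (cases "j < ?K") (auto simp: rf_neg)
      then show ?thesis using False by (auto simp: mr_def)
    qed (simp add: v_def)
  qed
  have "(\<Sum>j\<in>{-N..N}. mr ?K (int m) (int n) ?K j) = (\<Sum>j\<in>{-N..N}. if j = ?K then v else 0)"
    by (rule sum.cong) (simp_all only: eq)
  also have "\<dots> = mr ?K (int m) (int n) ?K ?K"
    using 0 by (simp add: v_def)
  also have "\<dots> = mLeft ?K (int m) (int n) ?K"
  proof -
    have a: "fact (nat (?K + int m)) * invfact (int m + ?K) = 1" using fi[of "?K + int m"] by (simp add: add.commute)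
    have b: "fact (nat (int n + ?K)) * invfact (int n + ?K) = 1" using fi[of "int n + ?K"] by simp
    have c: "invfact 0 = 1" by (simp add: invfact_def)
    have "mLeft ?K (int m) (int n) ?K = fact (nat (int m + int n)) * invfact (?K+?K) * invfact (int m - ?K)
      * invfact (int n - ?K) * (fact (nat (?K + int m)) * invfact (int m + ?K))
      * (fact (nat (int n + ?K)) * invfact (int n + ?K)) * invfact (?K - ?K)"
      unfolding mLeft_def by (simp add: algebra_simps)
    also have "\<dots> = mr ?K (int m) (int n) ?K ?K" unfolding a b by (simp add: mr_def c algebra_simps)
    finally show ?thesis by simp
  qed
  finally show ?case by simp
next
  case (Suc p)
  define l where "l = int (K+p)"
  let ?m = "int m" and ?n = "int n" and ?K = "int K"
  have l1: "int (K + Suc p) = l + 1" unfolding l_def by simp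
  have N: "l \<le> N" "0 \<le> N" "l + 1 \<le> N" using Suc.prems unfolding l1 l_def by auto
  have l0: "0 \<le> l" "?K \<le> l" unfolding l_def by auto
  have "(\<Sum>j\<in>{-N..N}. real_of_int ((l+?K+1)*(l+1-?K)) * mr (l+1) ?m ?n ?K j
            - real_of_int ((l+?m+1)*(l+?n+1)) * mr l ?m ?n ?K j) = (\<Sum>j\<in>{-N..N}. mH l ?m ?n ?K (j+1) - mH l ?m ?n ?K j)"
    using l0 by (simp only: m_pt of_nat_0_le_iff)
  also have "\<dots> = mH l ?m ?n ?K (N+1) - mH l ?m ?n ?K (-N)" by (rule tele) (use N in simp)
  also have "\<dots> = 0" using N by (simp add: mH_def rf_neg)
  finally have "real_of_int ((l+?K+1)*(l+1-?K)) * (\<Sum>j\<in>{-N..N}. mr (l+1) ?m ?n ?K j)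
      = real_of_int ((l+?m+1)*(l+?n+1)) * (\<Sum>j\<in>{-N..N}. mr l ?m ?n ?K j)"
    by (simp add: sum_subtractf sum_distrib_left)
  also have "\<dots> = real_of_int ((l+?m+1)*(l+?n+1)) * mLeft l ?m ?n ?K" using Suc.IH N unfolding l_def by simp
  also have "\<dots> = real_of_int ((l+?K+1)*(l+1-?K)) * mLeft (l+1) ?m ?n ?K"
  proof -
    have e1: "fact (nat (l+1+?m)) = of_int (l+1+?m) * (fact (nat (l+?m)) :: real)" by (rule fact_up) (use l0 in simp_all)
    have e2: "fact (nat (?n+(l+1))) = of_int (?n+(l+1)) * (fact (nat (?n+l)) :: real)" by (rule fact_up) (use l0 in simp_all)
    have e3: "invfact (l+?K) = of_int (l+1+?K) * invfact (l+1+?K)" by (rule rf_up) simp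
    have e4: "invfact (l-?K) = of_int (l+1-?K) * invfact (l+1-?K)" by (rule rf_up) simp
    show ?thesis unfolding mLeft_def e1 e2 e3 e4 of_int_add of_int_diff of_int_mult of_int_1 by algebra
  qed
  finally have "(\<Sum>j\<in>{-N..N}. mr (l+1) ?m ?n ?K j) = mLeft (l+1) ?m ?n ?K"
    using l0 by (simp add: mult.commute)
  then show ?case unfolding l1 .
qed


lemma zb_real: "0 \<le> a \<Longrightarrow> real_of_int (zbinom a b) = fact (nat a) * invfact b * invfact (a-b)"
proof -
  assume a: "0 \<le> a"
  show ?thesis
  proof (cases "0 \<le> b \<and> b \<le> a")
    case True
    then have "nat b \<le> nat a" by (simp add: nat_mono)
    then have "real (nat a choose nat b) = fact (nat a) / (fact (nat b) * fact (nat a - nat b))"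
      by (rule binomial_fact)
    moreover have "nat (a - b) = nat a - nat b" using True by (simp add: nat_diff_distrib)
    ultimately show ?thesis using True by (simp add: zbinom_def invfact_def)
  next
    case False
    then show ?thesis by (auto simp: zbinom_def rf_neg)
  qed
qed

lemma mLeft_sym: "mLeft l m n (-k) = mLeft l m n k"
  unfolding mLeft_def by (simp add: algebra_simps)

lemma mr_sym: "mr l m n (-k) j = mr l m n k j"
  unfolding mr_def by (simp add: algebra_simps)

lemma Mfull:
  fixes l m n :: nat and k N :: int
  assumes "int l \<le> N"
  shows "mLeft (int l) (int m) (int n) k = (\<Sum>j\<in>{-N..N}. mr (int l) (int m) (int n) k j)"
proof -
  define K where "K = nat \<bar>k\<bar>"
  have s1: "mLeft (int l) (int m) (int n) k = mLeft (int l) (int m) (int n) (int K)"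
    and s2: "\<And>j. mr (int l) (int m) (int n) k j = mr (int l) (int m) (int n) (int K) j"
    unfolding K_def by (cases "k \<ge> 0"; simp add: mLeft_sym mr_sym)+
  show ?thesis
  proof (cases "K \<le> l")
    case True
    then have "int (K + (l - K)) = int l" by simp
    then show ?thesis unfolding s1 s2 using M_fin[of K "l-K" N m n] assms by simp
  next
    case False
    then have "invfact (int l - int K) = 0" by (simp add: rf_neg)
    then have "mLeft (int l) (int m) (int n) (int K) = 0" by (simp add: mLeft_def)
    moreover have "mr (int l) (int m) (int n) (int K) j = 0" for j
    proof (cases "j \<le> int l")
      case True then have "j - int K < 0" using False by simp
      then show ?thesis by (simp add: mr_def rf_neg)
    next
      case False then show ?thesis by (simp add: mr_def rf_neg)
    qed
    ultimately show ?thesis unfolding s1 s2 by simp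
  qed
qed



lemma infsum_supp:
  fixes f :: "'a \<Rightarrow> real"
  assumes "finite A" "\<And>x. x \<notin> A \<Longrightarrow> f x = 0"
  shows "infsum f UNIV = sum f A"
proof -
  have "infsum f UNIV = infsum f A" by (rule infsum_cong_neutral) (use assms in auto)
  then show ?thesis using assms(1) by simp
qed

lemma sum_int_nat: "(\<Sum>j\<in>{0..int M}. h j) = (\<Sum>i\<in>{0..M}. h (int i))"
proof -
  have "int ` {0..M} = {0..int M}" by (simp add: image_int_atLeastAtMost)
  then have "(\<Sum>j\<in>{0..int M}. h j) = (\<Sum>j\<in>int ` {0..M}. h j)" by simp
  also have "\<dots> = (\<Sum>i\<in>{0..M}. h (int i))" by (simp add: sum.reindex)
  finally show ?thesis .
qed

theorem corollary5p8:
  fixes l m n u v :: nat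
  shows "(\<Sum>\<^sub>\<infinity>k::int. (-1) powi k *
            of_int (zbinom (int l + int m) (int l + k) * zbinom (int m + int n) (int m + k)
                  * zbinom (int n + int l) (int n + k) * zbinom (int u + int v) (int u + k)
                  * zbinom (int u + int v) (int v + k)) :: real)
       = real (u + v choose u) *
         (\<Sum>\<^sub>\<infinity>k::nat. fact (l + m + n - k) * fact (u + v + k)
             * invfact (int k) * invfact (int l - int k) * invfact (int m - int k)
             * invfact (int n - int k) * invfact (int u + int k) * invfact (int v + int k))"
  (is "infsum ?f UNIV = _ * infsum ?g UNIV")
proof -
  define N where "N = int (l+m+n+u+v+1)"
  define F where "F = (fact (u+v) :: real)"
  define c where "c j = fact (nat (int l + int m + int n - j)) * invfact (int l - j) * invfact (int m - j) * invfact (int n - j)" for j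
  have N0: "0 \<le> N" "int l \<le> N" "int l < N" unfolding N_def by auto
  have s1: "infsum ?f UNIV = (\<Sum>k\<in>{-N..N}. ?f k)"
  proof (rule infsum_supp)
    fix k assume "k \<notin> {-N..N}"
    then have "int l + k < 0 \<or> int l + k > int l + int m" unfolding N_def by auto
    then have "zbinom (int l + int m) (int l + k) = 0" by (auto simp: zbinom_def)
    then show "?f k = 0" by simp
  qed simp
  have s2: "?f k = (\<Sum>j\<in>{-N..N}. c j * F^2 * dT j (int u) (int v) k)" for k
  proof -
    have z1: "real_of_int (zbinom (int l + int m) (int l + k)) = fact (l+m) * invfact (int l + k) * invfact (int m - k)"
      by (simp add: zb_real nat_add_distrib)
    have z2: "real_of_int (zbinom (int m + int n) (int m + k)) = fact (m+n) * invfact (int m + k) * invfact (int n - k)"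
      by (simp add: zb_real nat_add_distrib)
    have z3: "real_of_int (zbinom (int n + int l) (int n + k)) = fact (n+l) * invfact (int n + k) * invfact (int l - k)"
      by (simp add: zb_real nat_add_distrib)
    have z4: "real_of_int (zbinom (int u + int v) (int u + k)) = F * invfact (int u + k) * invfact (int v - k)"
      by (simp add: zb_real nat_add_distrib F_def)
    have z5: "real_of_int (zbinom (int u + int v) (int v + k)) = F * invfact (int v + k) * invfact (int u - k)"
      by (simp add: zb_real nat_add_distrib F_def)
    have mL: "fact (l+m) * invfact (int l + k) * invfact (int m - k) * (fact (m+n) * invfact (int m + k) * invfact (int n - k))
       * (fact (n+l) * invfact (int n + k) * invfact (int l - k)) = mLeft (int l) (int m) (int n) k"
      unfolding mLeft_def by (simp add: nat_add_distrib ac_simps)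
    define B where "B = F * invfact (int u + k) * invfact (int v - k) * (F * invfact (int v + k) * invfact (int u - k))"
    have "?f k = (-1) powi k * mLeft (int l) (int m) (int n) k * B"
      unfolding of_int_mult z1 z2 z3 z4 z5 B_def mL[symmetric] by (simp add: ac_simps)
    also have "\<dots> = (\<Sum>j\<in>{-N..N}. (-1) powi k * mr (int l) (int m) (int n) k j * B)"
      using Mfull[of l N m n k] N0 by (simp add: sum_distrib_left sum_distrib_right)
    also have "\<dots> = (\<Sum>j\<in>{-N..N}. c j * F^2 * dT j (int u) (int v) k)"
      by (rule sum.cong) (simp_all add: mr_def dT_def c_def B_def power2_eq_square ac_simps)
    finally show ?thesis .
  qed
  have s3: "(\<Sum>k\<in>{-N..N}. dT j (int u) (int v) k) = (if 0 \<le> j then dV (nat j) u v else 0)"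
    if "j \<in> {-N..N}" for j
  proof (cases "0 \<le> j")
    case True
    then have "int (nat j) \<le> N" using that by simp
    from dixon_fin[OF this, of u v] True show ?thesis by simp
  next
    case False
    have "dT j (int u) (int v) k = 0" for k
    proof (cases "0 \<le> k")
      case True then have "j - k < 0" using False by simp
      then show ?thesis by (simp add: dT_def rf_neg)
    next
      case False then have "j + k < 0" using \<open>\<not> 0 \<le> j\<close> by simp
      then show ?thesis by (simp add: dT_def rf_neg)
    qed
    then show ?thesis using False by simp
  qed
  have "infsum ?f UNIV = (\<Sum>k\<in>{-N..N}. \<Sum>j\<in>{-N..N}. c j * F^2 * dT j (int u) (int v) k)"
    unfolding s1 using s2 by simp
  also have "\<dots> = (\<Sum>j\<in>{-N..N}. \<Sum>k\<in>{-N..N}. c j * F^2 * dT j (int u) (int v) k)"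
    by (rule sum.swap)
  also have "\<dots> = (\<Sum>j\<in>{-N..N}. c j * F^2 * (\<Sum>k\<in>{-N..N}. dT j (int u) (int v) k))"
    by (simp add: sum_distrib_left)
  also have "\<dots> = (\<Sum>j\<in>{-N..N}. if 0 \<le> j then c j * F^2 * dV (nat j) u v else 0)"
    by (rule sum.cong) (simp_all add: s3)
  also have "\<dots> = (\<Sum>j\<in>{0..N}. c j * F^2 * dV (nat j) u v)"
  proof -
    have "{0..N} \<subseteq> {-N..N}" by auto
    then have "(\<Sum>j\<in>{-N..N}. if 0 \<le> j then c j * F^2 * dV (nat j) u v else 0)
       = (\<Sum>j\<in>{0..N}. if 0 \<le> j then c j * F^2 * dV (nat j) u v else 0)"
      by (intro sum.mono_neutral_right) auto
    then show ?thesis by simp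
  qed
  also have "\<dots> = (\<Sum>i\<in>{0..nat N}. c (int i) * F^2 * dV i u v)"
    using sum_int_nat[of "\<lambda>j. c j * F^2 * dV (nat j) u v" "nat N"] N0 by simp
  also have "\<dots> = (\<Sum>i\<in>{0..nat N}. real (u + v choose u) * ?g i)"
  proof (rule sum.cong)
    fix i assume "i \<in> {0..nat N}"
    have C: "real (u + v choose u) = F * invfact (int u) * invfact (int v)"
      using binomial_fact[of u "u+v"] by (simp add: F_def invfact_def)
    have Fi: "F * invfact (int u + int v) = 1" using fact_invfact[of "u+v"] by (simp add: F_def)
    show "c (int i) * F^2 * dV i u v = real (u + v choose u) * ?g i"
    proof (cases "i \<le> l+m+n")
      case True
      then have "nat (int l + int m + int n - int i) = l+m+n-i" by simp
      then show ?thesis unfolding C c_def dV_def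
        using Fi by (simp add: power2_eq_square ac_simps)
    next
      case False
      then show ?thesis by (simp add: c_def rf_neg)
    qed
  qed simp
  also have "\<dots> = real (u + v choose u) * infsum ?g UNIV"
  proof -
    have "infsum ?g UNIV = sum ?g {0..nat N}"
    proof (rule infsum_supp)
      fix i assume "i \<notin> {0..nat N}"
      then have "int l - int i < 0" unfolding N_def by auto
      then show "?g i = 0" by (simp add: rf_neg)
    qed simp
    then show ?thesis by (simp add: sum_distrib_left)
  qed
  finally show ?thesis .
qed


end
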